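(* Let $0\le\alpha<1$ and $K_\alpha:=\operatorname{conv}\{\pm(1,\alpha),\pm(0,1)\}\subseteq\mathbb{R}^2$. Then $\mu_2(K_\alpha)=\frac12\max\{1+\alpha,2-\alpha\}$.
   Context: For a closed convex set $K\subseteq\mathbb{R}^2$ with non-empty interior, $\mu_2(K):=\inf\{t\ge0: tK+\mathbb{Z}^2=\mathbb{R}^2\}$ (the second covering minimum, or inhomogeneous minimum). *)

theory Defs
  imports "HOL-Analysis.Analysis"
begin

definition int_lattice2 :: "(real \<times> real) set" where
  "int_lattice2 = {(of_int a, of_int b) | a b :: int. True}"

definition covering_minimum2 :: "(real \<times> real) set \<Rightarrow> real" where
  "covering_minimum2 K =
     Inf {t. t \<ge> 0 \<and> (\<lambda>(y, z). t *\<^sub>R y + z) ` (K \<times> int_lattice2) = UNIV}"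

definition K_alpha :: "real \<Rightarrow> (real \<times> real) set" where
  "K_alpha \<alpha> = convex hull {(1, \<alpha>), (-1, -\<alpha>), (0, 1), (0, -1)}"

end

theory Submission imports Defs begin

definition NN :: "real \<Rightarrow> (real \<times> real) set" where
  "NN \<alpha> = {(u,y). \<bar>u\<bar> + \<bar>y - \<alpha> * u\<bar> \<le> 1}"

lemma convex_NN: "convex (NN \<alpha>)"
proof (rule convexI)
  fix p q :: "real\<times>real" and a b :: real
  assume p: "p \<in> NN \<alpha>" and q: "q \<in> NN \<alpha>" and a: "0 \<le> a" and b: "0 \<le> b" and ab: "a + b = 1"
  obtain u1 y1 where p': "p = (u1,y1)" by fastforce
  obtain u2 y2 where q': "q = (u2,y2)" by fastforce
  have h1: "\<bar>u1\<bar> + \<bar>y1 - \<alpha> * u1\<bar> \<le> 1" using p p' by (simp add: NN_def)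
  have h2: "\<bar>u2\<bar> + \<bar>y2 - \<alpha> * u2\<bar> \<le> 1" using q q' by (simp add: NN_def)
  have e1: "\<bar>a*u1 + b*u2\<bar> \<le> a*\<bar>u1\<bar> + b*\<bar>u2\<bar>"
    by (metis a b abs_mult abs_of_nonneg abs_triangle_ineq)
  have "a*y1 + b*y2 - \<alpha> * (a*u1 + b*u2) = a*(y1 - \<alpha> * u1) + b*(y2 - \<alpha> * u2)" by (simp add: algebra_simps)
  hence e2: "\<bar>a*y1 + b*y2 - \<alpha> * (a*u1 + b*u2)\<bar> \<le> a*\<bar>y1 - \<alpha> * u1\<bar> + b*\<bar>y2 - \<alpha> * u2\<bar>"
    by (metis a b abs_mult abs_of_nonneg abs_triangle_ineq)
  have "a*(\<bar>u1\<bar> + \<bar>y1 - \<alpha> * u1\<bar>) + b*(\<bar>u2\<bar> + \<bar>y2 - \<alpha> * u2\<bar>) \<le> a*1 + b*1"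
    using h1 h2 a b by (intro add_mono mult_left_mono) auto
  then show "a *\<^sub>R p + b *\<^sub>R q \<in> NN \<alpha>" using e1 e2 ab
    by (simp add: p' q' NN_def algebra_simps)
qed

lemma K_sub: "K_alpha \<alpha> \<subseteq> NN \<alpha>"
  unfolding K_alpha_def
  using convex_NN by (intro hull_minimal) (auto simp: NN_def)

lemma N_sub: assumes "\<bar>u\<bar> + \<bar>y - \<alpha> * u\<bar> \<le> 1" shows "(u,y) \<in> K_alpha \<alpha>"
proof -
  define S where "S = {(1::real, \<alpha>), (-1, -\<alpha>), (0, 1), (0, -1::real)}"
  define k where "k = y - \<alpha> * u"
  define r where "r = 1 - \<bar>u\<bar> - \<bar>k\<bar>"
  have r: "r \<ge> 0" using assms by (simp add: r_def k_def)
  define c where "c = (\<lambda>p::real\<times>real. if p = (1,\<alpha>) then max u 0 else if p = (-1,-\<alpha>) then max (-u) 0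
     else if p = (0,1) then max k 0 + r/2 else max (-k) 0 + r/2)"
  have "(\<forall>x\<in>S. 0 \<le> c x) \<and> sum c S = 1 \<and> (\<Sum>x\<in>S. c x *\<^sub>R x) = (u,y)"
    using r by (auto simp: S_def c_def r_def k_def max_def)
  then show ?thesis unfolding K_alpha_def
    by (subst convex_hull_finite) (auto simp: S_def)
qed


lemma w_lemma:
  fixes \<alpha> w :: real
  assumes "0 \<le> \<alpha>" "\<alpha> < 1"
  shows "\<exists>(b1::int) (b2::int). \<bar>w - b1\<bar> + \<bar>w + \<alpha> - b2\<bar> \<le> max \<alpha> (1 - \<alpha>)"
proof -
  define n where "n = floor w"
  have f: "of_int n \<le> w" "w < of_int n + 1" unfolding n_def by linarith+
  show ?thesis
  proof (cases "w - n + \<alpha> \<le> 1")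
    case True
    hence "\<bar>w - n\<bar> + \<bar>w + \<alpha> - (of_int n + 1)\<bar> \<le> max \<alpha> (1 - \<alpha>)" using f assms by (smt (verit))
    then show ?thesis by (metis of_int_1 of_int_add)
  next
    case False
    hence "\<bar>w - (of_int n + 1)\<bar> + \<bar>w + \<alpha> - (of_int n + 1)\<bar> \<le> max \<alpha> (1 - \<alpha>)" using f assms False by (smt (verit))
    then show ?thesis by (metis of_int_1 of_int_add)
  qed
qed

lemma cover_lemma:
  fixes \<alpha> x y :: real
  assumes "0 \<le> \<alpha>" "\<alpha> < 1"
  shows "\<exists>(a::int) (b::int). \<bar>x - a\<bar> + \<bar>(y - b) - \<alpha> * (x - a)\<bar> \<le> (1/2) * max (1 + \<alpha>) (2 - \<alpha>)"
proof -
  define m where "m = floor x"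
  define s where "s = x - m"
  have s: "0 \<le> s" "s < 1" unfolding s_def m_def by linarith+
  define w where "w = y - \<alpha> * s"
  obtain b1 b2 :: int where bb: "\<bar>w - b1\<bar> + \<bar>w + \<alpha> - b2\<bar> \<le> max \<alpha> (1 - \<alpha>)"
    using w_lemma[OF assms] by blast
  show ?thesis
  proof (cases "s + \<bar>w - b1\<bar> \<le> (1/2) * max (1 + \<alpha>) (2 - \<alpha>)")
    case True
    have "\<bar>x - m\<bar> + \<bar>(y - b1) - \<alpha> * (x - m)\<bar> = s + \<bar>w - b1\<bar>"
      using s by (simp add: s_def w_def algebra_simps)
    then show ?thesis using True by metis
  next
    case False
    have "\<bar>x - (of_int m + 1)\<bar> + \<bar>(y - b2) - \<alpha> * (x - (of_int m + 1))\<bar> = (1 - s) + \<bar>w + \<alpha> - b2\<bar>"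
      using s by (simp add: s_def w_def algebra_simps)
    moreover have "(1 - s) + \<bar>w + \<alpha> - b2\<bar> \<le> (1/2) * max (1 + \<alpha>) (2 - \<alpha>)"
      proof -
      have "max (1 + \<alpha>) (2 - \<alpha>) = 1 + max \<alpha> (1 - \<alpha>)" by (simp add: max_def)
      moreover obtain P Q where "P = \<bar>w - real_of_int b1\<bar>" "Q = \<bar>w + \<alpha> - real_of_int b2\<bar>" by blast
      moreover obtain M where "M = max \<alpha> (1 - \<alpha>)" by blast
      ultimately show ?thesis using False bb s by simp
    qed
    ultimately show ?thesis by (metis of_int_1 of_int_add)
  qed
qed

lemma lower1:
  fixes \<alpha> t :: real and a b :: int
  assumes "0 \<le> \<alpha>" "\<alpha> < 1"
  and "\<bar>1/2 - a\<bar> + \<bar>(1/2 - b) - \<alpha> * (1/2 - a)\<bar> \<le> t"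
  shows "1 - \<alpha>/2 \<le> t"
proof -
  have A: "a \<le> -1 \<or> a = 0 \<or> a = 1 \<or> a \<ge> 2" by linarith
  have B: "b \<le> 0 \<or> b \<ge> 1" by linarith
  from A show ?thesis
  proof (elim disjE)
    assume "a \<le> -1" hence "real_of_int a \<le> -1" by simp
    moreover have "1/2 - real_of_int a \<le> \<bar>1/2 - real_of_int a\<bar>" by (rule abs_ge_self)
    ultimately show ?thesis using assms abs_ge_zero[of "(X - real_of_int b) - \<alpha> * (1/2 - real_of_int a)" for X] by linarith
  next
    assume "a \<ge> 2" hence "real_of_int a \<ge> 2" by simp
    moreover have "-(1/2 - real_of_int a) \<le> \<bar>1/2 - real_of_int a\<bar>" by (rule abs_ge_minus_self)
    ultimately show ?thesis using assms abs_ge_zero[of "(X - real_of_int b) - \<alpha> * (1/2 - real_of_int a)" for X] by linarith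
  next
    assume "a = 0"
    hence "1/2 + \<bar>1/2 - b - \<alpha>/2\<bar> \<le> t" using assms(3) by simp
    moreover have "real_of_int b \<le> 0 \<or> real_of_int b \<ge> 1" using B by auto
    ultimately show ?thesis using assms(1,2) abs_ge_self[of "1/2 - b - \<alpha>/2"] abs_ge_minus_self[of "1/2 - b - \<alpha>/2"] by (elim disjE) linarith+
  next
    assume "a = 1"
    hence "1/2 + \<bar>1/2 - b + \<alpha>/2\<bar> \<le> t" using assms(3) by simp
    moreover have "real_of_int b \<le> 0 \<or> real_of_int b \<ge> 1" using B by auto
    ultimately show ?thesis using assms(1,2) abs_ge_self[of "1/2 - b + \<alpha>/2"] abs_ge_minus_self[of "1/2 - b + \<alpha>/2"] by (elim disjE) linarith+
  qed
qed

lemma lower2: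
  fixes \<alpha> t :: real and a b :: int
  assumes "0 \<le> \<alpha>" "\<alpha> < 1"
  and "\<bar>1/2 - a\<bar> + \<bar>(- real_of_int b) - \<alpha> * (1/2 - a)\<bar> \<le> t"
  shows "1/2 + \<alpha>/2 \<le> t"
proof -
  have A: "a \<le> -1 \<or> a = 0 \<or> a = 1 \<or> a \<ge> 2" by linarith
  have B: "b \<le> -1 \<or> b = 0 \<or> b \<ge> 1" by linarith
  from A show ?thesis
  proof (elim disjE)
    assume "a \<le> -1" hence "real_of_int a \<le> -1" by simp
    moreover have "1/2 - real_of_int a \<le> \<bar>1/2 - real_of_int a\<bar>" by (rule abs_ge_self)
    moreover have "\<bar>1/2 - real_of_int a\<bar> \<le> t" using assms(3) abs_ge_zero[of "(- real_of_int b) - \<alpha> * (1/2 - real_of_int a)"] by linarith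
    ultimately show ?thesis using assms(1,2) by linarith
  next
    assume "a \<ge> 2" hence "real_of_int a \<ge> 2" by simp
    moreover have "-(1/2 - real_of_int a) \<le> \<bar>1/2 - real_of_int a\<bar>" by (rule abs_ge_minus_self)
    moreover have "\<bar>1/2 - real_of_int a\<bar> \<le> t" using assms(3) abs_ge_zero[of "(- real_of_int b) - \<alpha> * (1/2 - real_of_int a)"] by linarith
    ultimately show ?thesis using assms(1,2) by linarith
  next
    assume "a = 0"
    hence "1/2 + \<bar>- b - \<alpha>/2\<bar> \<le> t" using assms(3) by simp
    moreover have "real_of_int b \<le> -1 \<or> real_of_int b = 0 \<or> real_of_int b \<ge> 1" using B by auto
    ultimately show ?thesis using assms(1,2) abs_ge_self[of "- b - \<alpha>/2"] abs_ge_minus_self[of "- b - \<alpha>/2"] by (elim disjE) linarith+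
  next
    assume "a = 1"
    hence "1/2 + \<bar>- b + \<alpha>/2\<bar> \<le> t" using assms(3) by simp
    moreover have "real_of_int b \<le> -1 \<or> real_of_int b = 0 \<or> real_of_int b \<ge> 1" using B by auto
    ultimately show ?thesis using assms(1,2) abs_ge_self[of "- b + \<alpha>/2"] abs_ge_minus_self[of "- b + \<alpha>/2"] by (elim disjE) linarith+
  qed
qed


lemma scaled:
  fixes t u y :: real
  assumes "0 \<le> t" "(u,y) \<in> K_alpha \<alpha>"
  shows "\<bar>t*u\<bar> + \<bar>t*y - \<alpha> * (t*u)\<bar> \<le> t"
proof -
  have h: "\<bar>u\<bar> + \<bar>y - \<alpha> * u\<bar> \<le> 1" using K_sub assms(2) by (auto simp: NN_def)
  have "t*y - \<alpha> * (t*u) = t * (y - \<alpha> * u)" by (simp add: algebra_simps)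
  hence "\<bar>t*u\<bar> + \<bar>t*y - \<alpha> * (t*u)\<bar> = t * (\<bar>u\<bar> + \<bar>y - \<alpha> * u\<bar>)"
    using assms(1) by (simp add: abs_mult distrib_left)
  also have "\<dots> \<le> t * 1" using h assms(1) by (intro mult_left_mono)
  finally show ?thesis by simp
qed

lemma in_image:
  fixes \<alpha> t :: real
  assumes "0 \<le> t" "(p1, p2) \<in> (\<lambda>(y, z). t *\<^sub>R y + z) ` (K_alpha \<alpha> \<times> int_lattice2)"
  shows "\<exists>(a::int) (b::int). \<bar>p1 - a\<bar> + \<bar>(p2 - b) - \<alpha> * (p1 - a)\<bar> \<le> t"
proof -
  obtain u y z1 z2 where k: "(u,y) \<in> K_alpha \<alpha>" and z: "(z1,z2) \<in> int_lattice2"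
    and e: "(p1,p2) = t *\<^sub>R (u,y) + (z1,z2)"
    using assms(2) by auto
  obtain a b :: int where ab: "z1 = of_int a" "z2 = of_int b" using z by (auto simp: int_lattice2_def)
  have e1: "p1 - a = t*u" and e2: "p2 - b = t*y" using e ab by auto
  show ?thesis using scaled[OF assms(1) k] e1 e2 by metis
qed

theorem lemma16:
  fixes \<alpha> :: real
  assumes "0 \<le> \<alpha>" and "\<alpha> < 1"
  shows "covering_minimum2 (K_alpha \<alpha>) = (1/2) * max (1 + \<alpha>) (2 - \<alpha>)"
proof -
  define \<mu> where "\<mu> = (1/2) * max (1 + \<alpha>) (2 - \<alpha>)"
  have mupos: "\<mu> > 0" unfolding \<mu>_def using assms by (simp add: max_def)
  have mem: "\<mu> \<in> {t. t \<ge> 0 \<and> (\<lambda>(y, z). t *\<^sub>R y + z) ` (K_alpha \<alpha> \<times> int_lattice2) = UNIV}"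
  proof -
    have "p \<in> (\<lambda>(y, z). \<mu> *\<^sub>R y + z) ` (K_alpha \<alpha> \<times> int_lattice2)" for p
    proof -
      obtain x y where p: "p = (x,y)" by fastforce
      obtain a b :: int where ab: "\<bar>x - a\<bar> + \<bar>(y - b) - \<alpha> * (x - a)\<bar> \<le> \<mu>"
        using cover_lemma[OF assms, of x y] unfolding \<mu>_def by blast
      define k where "k = ((x - a)/\<mu>, (y - b)/\<mu>)"
      have e0: "(y - b)/\<mu> - \<alpha> * ((x - a)/\<mu>) = ((y - b) - \<alpha> * (x - a))/\<mu>"
        unfolding times_divide_eq_right by (rule diff_divide_distrib[symmetric])
      have "\<bar>(x - a)/\<mu>\<bar> + \<bar>(y - b)/\<mu> - \<alpha> * ((x - a)/\<mu>)\<bar> = (\<bar>x - a\<bar> + \<bar>(y - b) - \<alpha> * (x - a)\<bar>)/\<mu>"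
        unfolding e0 by (simp only: abs_divide abs_of_pos[OF mupos] add_divide_distrib)
      also have "\<dots> \<le> 1" using ab mupos by simp
      finally have kK: "k \<in> K_alpha \<alpha>" unfolding k_def by (rule N_sub)
      have zL: "(real_of_int a, real_of_int b) \<in> int_lattice2" by (auto simp: int_lattice2_def)
      have "p = \<mu> *\<^sub>R k + (real_of_int a, real_of_int b)" using mupos by (simp add: p k_def)
      hence "p = (\<lambda>(y, z). \<mu> *\<^sub>R y + z) (k, (real_of_int a, real_of_int b))" by simp
      moreover have "(k, (real_of_int a, real_of_int b)) \<in> K_alpha \<alpha> \<times> int_lattice2" using kK zL by blast
      ultimately show ?thesis by (rule image_eqI)
    qed
    hence "UNIV = (\<lambda>(y, z). \<mu> *\<^sub>R y + z) ` (K_alpha \<alpha> \<times> int_lattice2)" by (rule UNIV_eq_I)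
    hence "(\<lambda>(y, z). \<mu> *\<^sub>R y + z) ` (K_alpha \<alpha> \<times> int_lattice2) = UNIV" by (rule sym)
    then show ?thesis using mupos by (intro CollectI conjI) (rule less_imp_le, assumption)
  qed
  have low: "\<mu> \<le> t" if t: "t \<in> {t. t \<ge> 0 \<and> (\<lambda>(y, z). t *\<^sub>R y + z) ` (K_alpha \<alpha> \<times> int_lattice2) = UNIV}" for t
  proof -
    have tt: "t \<ge> 0 \<and> (\<lambda>(y, z). t *\<^sub>R y + z) ` (K_alpha \<alpha> \<times> int_lattice2) = UNIV" using t by (rule CollectD)
    have t0: "t \<ge> 0" using tt by (rule conjunct1)
    have im: "(\<lambda>(y, z). t *\<^sub>R y + z) ` (K_alpha \<alpha> \<times> int_lattice2) = UNIV" using tt by (rule conjunct2)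
    obtain a b :: int where "\<bar>1/2 - a\<bar> + \<bar>(1/2 - b) - \<alpha> * (1/2 - a)\<bar> \<le> t"
      using in_image[OF t0, of "1/2" "1/2"] im by (metis UNIV_I)
    hence l1: "1 - \<alpha>/2 \<le> t" using lower1[OF assms] by blast
    obtain a' b' :: int where "\<bar>1/2 - a'\<bar> + \<bar>(0 - real_of_int b') - \<alpha> * (1/2 - a')\<bar> \<le> t"
      using in_image[OF t0, of "1/2" "0"] im by (metis UNIV_I)
    hence "\<bar>1/2 - a'\<bar> + \<bar>(- real_of_int b') - \<alpha> * (1/2 - a')\<bar> \<le> t" by simp
    hence l2: "1/2 + \<alpha>/2 \<le> t" using lower2[OF assms] by blast
    show ?thesis unfolding \<mu>_def using l1 l2 by (simp add: max_def)
  qed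
  show ?thesis unfolding covering_minimum2_def \<mu>_def[symmetric]
    by (rule cInf_eq_minimum[OF mem low])
qed

end
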